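(* Let $q$ be a prime power, $m\ge1$, $Q:=q^m$, and let $\mathcal{C}$ be an $[[n,\tilde{k},d]]_{q^m}$ rank-metric code defined from a linear code over $\mathbb{F}_Q$ with generator matrix $G\in\mathbb{F}_Q^{\tilde{k}\times n}$. Then $E\colon\mathbb{F}_Q^n\to\mathbb{F}_Q^{\tilde{k}}$, $E(x):=Gx^\top$, is an $(n-d+1,0)$-extractor for $\mathbb{F}_q$-restricted affine sources over $\mathbb{F}_Q$. Conversely, if a linear function $E\colon\mathbb{F}_Q^n\to\mathbb{F}_Q^{\tilde{k}}$ is an $(n-d+1,0)$-extractor for all $\mathbb{F}_q$-restricted affine sources over $\mathbb{F}_Q$, then its matrix is a generator matrix of an $[[n,\tilde{k},d]]_{q^m}$ code.
   Context: Fix an $\mathbb{F}_q$-linear isomorphism $\varphi\colon\mathbb{F}_Q\to\mathbb{F}_q^m$ (elements mapped to column vectors), and define $\Phi\colon\mathbb{F}_Q^n\to\mathbb{F}_q^{m\times n}$ by $\Phi(x_1,\dots,x_n)=[\varphi(x_1)|\cdots|\varphi(x_n)]$. An $[[n,\tilde{k},d]]_{q^m}$ code is a $\tilde{k}$-dimensional $\mathbb{F}_Q$-linear subspace $\mathcal{C}\subseteq\mathbb{F}_Q^n$ whose rank distance $d$ equals $\min\{\mathrm{rank}_{\mathbb{F}_q}\Phi(c): c\in\mathcal{C},c\neq0\}$. A $k$-dimensional affine source over $\mathbb{F}_Q^n$ is the uniform distribution on $\{xA+\beta: x\in\mathbb{F}_Q^k\}$ for some rank-$k$ matrix $A\in\mathbb{F}_Q^{k\times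 n}$ and $\beta\in\mathbb{F}_Q^n$; it is $\mathbb{F}_q$-restricted if $A$ can be chosen with entries in $\mathbb{F}_q$. A function $f\colon\mathbb{F}_Q^n\to\mathbb{F}_Q^{\tilde{k}}$ is a $(k,0)$-extractor for a class of affine sources if for every source in the class of dimension at least $k$, $f$ applied to it is exactly uniform on $\mathbb{F}_Q^{\tilde{k}}$. *)

theory Defs
  imports "HOL-Probability.Probability_Mass_Function"
begin

text \<open>Vectors of length n over a field are functions nat => 'a vanishing from index n on;
matrices with r rows and c columns are functions nat => nat => 'a (only entries i<r, j<c matter).\<close>

definition vecs :: "nat \<Rightarrow> (nat \<Rightarrow> 'a::zero) set" where
  "vecs n = {x. \<forall>i\<ge>n. x i = 0}"

text \<open>F is a subfield of the (finite) field 'a: plays the role of F_q inside F_Q.\<close>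
definition is_subfield :: "'a::field set \<Rightarrow> bool" where
  "is_subfield F \<longleftrightarrow> 0 \<in> F \<and> 1 \<in> F \<and>
     (\<forall>x\<in>F. \<forall>y\<in>F. x + y \<in> F \<and> x * y \<in> F) \<and>
     (\<forall>x\<in>F. - x \<in> F \<and> inverse x \<in> F)"

definition is_coord_iso :: "'a::field set \<Rightarrow> nat \<Rightarrow> ('a \<Rightarrow> nat \<Rightarrow> 'a) \<Rightarrow> bool" where
  "is_coord_iso F m phi \<longleftrightarrow>
     bij_betw phi UNIV {v. \<forall>i. (i < m \<longrightarrow> v i \<in> F) \<and> (m \<le> i \<longrightarrow> v i = 0)} \<and>
     (\<forall>x y. phi (x + y) = (\<lambda>i. phi x i + phi y i)) \<and>
     (\<forall>a\<in>F. \<forall>x. phi (a * x) = (\<lambda>i. a * phi x i))"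

definition indep_cols :: "'a::field set \<Rightarrow> (nat \<Rightarrow> nat \<Rightarrow> 'a) \<Rightarrow> nat \<Rightarrow> nat set \<Rightarrow> bool" where
  "indep_cols K M r S \<longleftrightarrow>
     (\<forall>a. (\<forall>j\<in>S. a j \<in> K) \<and> (\<forall>i<r. (\<Sum>j\<in>S. a j * M i j) = 0) \<longrightarrow> (\<forall>j\<in>S. a j = 0))"

definition mat_rank :: "'a::field set \<Rightarrow> (nat \<Rightarrow> nat \<Rightarrow> 'a) \<Rightarrow> nat \<Rightarrow> nat \<Rightarrow> nat" where
  "mat_rank K M r c = Max {card S | S. S \<subseteq> {..<c} \<and> indep_cols K M r S}"

definition Phi :: "('a \<Rightarrow> nat \<Rightarrow> 'a) \<Rightarrow> (nat \<Rightarrow> 'a) \<Rightarrow> nat \<Rightarrow> nat \<Rightarrow> 'a" where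
  "Phi phi x = (\<lambda>i j. phi (x j) i)"

definition vec_mat :: "(nat \<Rightarrow> 'a::comm_ring_1) \<Rightarrow> (nat \<Rightarrow> nat \<Rightarrow> 'a) \<Rightarrow> nat \<Rightarrow> nat \<Rightarrow> nat \<Rightarrow> 'a" where
  "vec_mat x A k n = (\<lambda>j. if j < n then (\<Sum>i<k. x i * A i j) else 0)"

definition mat_vec :: "(nat \<Rightarrow> nat \<Rightarrow> 'a::comm_ring_1) \<Rightarrow> nat \<Rightarrow> nat \<Rightarrow> (nat \<Rightarrow> 'a) \<Rightarrow> nat \<Rightarrow> 'a" where
  "mat_vec G kt n x = (\<lambda>i. if i < kt then (\<Sum>j<n. G i j * x j) else 0)"

definition code_of :: "(nat \<Rightarrow> nat \<Rightarrow> 'a::comm_ring_1) \<Rightarrow> nat \<Rightarrow> nat \<Rightarrow> (nat \<Rightarrow> 'a) set" where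
  "code_of G kt n = (\<lambda>y. vec_mat y G kt n) ` vecs kt"

definition rank_wt :: "'a::field set \<Rightarrow> nat \<Rightarrow> ('a \<Rightarrow> nat \<Rightarrow> 'a) \<Rightarrow> nat \<Rightarrow> (nat \<Rightarrow> 'a) \<Rightarrow> nat" where
  "rank_wt F m phi n c = mat_rank F (Phi phi c) m n"

definition is_rank_code_gen :: "'a::field set \<Rightarrow> nat \<Rightarrow> ('a \<Rightarrow> nat \<Rightarrow> 'a) \<Rightarrow>
    (nat \<Rightarrow> nat \<Rightarrow> 'a) \<Rightarrow> nat \<Rightarrow> nat \<Rightarrow> nat \<Rightarrow> bool" where
  "is_rank_code_gen F m phi G n kt d \<longleftrightarrow>
     mat_rank UNIV G kt n = kt \<and>
     (\<forall>c\<in>code_of G kt n. c \<noteq> (\<lambda>_. 0) \<longrightarrow> d \<le> rank_wt F m phi n c) \<and>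
     (\<exists>c\<in>code_of G kt n. c \<noteq> (\<lambda>_. 0) \<and> rank_wt F m phi n c = d)"

definition affine_source :: "(nat \<Rightarrow> nat \<Rightarrow> 'a::{comm_ring_1}) \<Rightarrow> (nat \<Rightarrow> 'a) \<Rightarrow> nat \<Rightarrow> nat \<Rightarrow> (nat \<Rightarrow> 'a) pmf" where
  "affine_source A beta k n = pmf_of_set ((\<lambda>x. (\<lambda>j. vec_mat x A k n j + beta j)) ` vecs k)"

text \<open>f : F_Q^n -> F_Q^kt is a (t,0)-extractor for F_q-restricted affine sources: for every
affine source of dimension k >= t given by a rank-k matrix A with entries in F_q and a
shift beta, f applied to it is exactly uniform on F_Q^kt.\<close>
definition restricted_extractor :: "'a::field set \<Rightarrow> ((nat \<Rightarrow> 'a) \<Rightarrow> (nat \<Rightarrow> 'a)) \<Rightarrow> nat \<Rightarrow> nat \<Rightarrow> nat \<Rightarrow> bool" where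
  "restricted_extractor F f n kt t \<longleftrightarrow>
     (\<forall>k A beta. t \<le> k \<and> (\<forall>i<k. \<forall>j<n. A i j \<in> F) \<and> mat_rank UNIV A k n = k \<and> beta \<in> vecs n
        \<longrightarrow> map_pmf f (affine_source A beta k n) = pmf_of_set (vecs kt))"

end

theory Submission
  imports Defs
begin

definition Wv :: "'a::zero set \<Rightarrow> nat set \<Rightarrow> (nat \<Rightarrow> 'a) set" where
  "Wv K T = {v. (\<forall>i\<in>T. v i \<in> K) \<and> (\<forall>i. i \<notin> T \<longrightarrow> v i = 0)}"

lemma card_Wv:
  assumes "finite T" "finite K"
  shows "finite (Wv K T) \<and> card (Wv K T) = card K ^ card T"
  using assms(1)
proof (induction T rule: finite_induct)
  case empty
  have "Wv K {} = {\<lambda>_. 0}" by (auto simp: Wv_def)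
  then show ?case by simp
next
  case (insert x T)
  have eq: "Wv K (insert x T) = (\<lambda>(a,w). w(x:=a)) ` (K \<times> Wv K T)"
  proof
    show "Wv K (insert x T) \<subseteq> (\<lambda>(a,w). w(x:=a)) ` (K \<times> Wv K T)"
    proof
      fix v assume v: "v \<in> Wv K (insert x T)"
      have "v = (\<lambda>(a,w). w(x:=a)) (v x, v(x:=0))" by auto
      moreover have "(v x, v(x:=0)) \<in> K \<times> Wv K T" using v insert(2) by (auto simp: Wv_def)
      ultimately show "v \<in> (\<lambda>(a,w). w(x:=a)) ` (K \<times> Wv K T)" by blast
    qed
  next
    show "(\<lambda>(a,w). w(x:=a)) ` (K \<times> Wv K T) \<subseteq> Wv K (insert x T)"
      using insert(2) by (auto simp: Wv_def)
  qed
  have inj: "inj_on (\<lambda>(a,w). w(x:=a)) (K \<times> Wv K T)"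
  proof (rule inj_onI, clarify)
    fix a w b u assume "a \<in> K" "w \<in> Wv K T" "b \<in> K" "u \<in> Wv K T" and e: "w(x := a) = u(x := b)"
    then have "w x = 0" "u x = 0" using insert(2) by (auto simp: Wv_def)
    moreover have "a = b" using fun_cong[OF e, of x] by simp
    moreover have "\<forall>i. i \<noteq> x \<longrightarrow> w i = u i" using e by (metis fun_upd_other)
    ultimately show "a = b \<and> w = u" by (metis ext)
  qed
  show ?case using insert assms(2) eq inj
    by (simp add: card_image card_cartesian_product)
qed

lemma vecs_Wv: "vecs k = Wv UNIV {..<k}" by (auto simp: vecs_def Wv_def)

lemma finite_vecs: "finite (vecs k :: (nat \<Rightarrow> 'a::{finite,zero}) set)"
  using card_Wv[of "{..<k}" "UNIV :: 'a set"] by (simp add: vecs_Wv)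

lemma card_vecs: "card (vecs k :: (nat \<Rightarrow> 'a::{finite,zero}) set) = CARD('a) ^ k"
  using card_Wv[of "{..<k}" "UNIV :: 'a set"] by (simp add: vecs_Wv)

lemma subfield_UNIV: "is_subfield (UNIV::'a::field set)" by (simp add: is_subfield_def)

lemma subfield_card2:
  assumes "is_subfield K" "finite K"
  shows "2 \<le> card K"
proof -
  have "{0,1} \<subseteq> K" using assms(1) by (auto simp: is_subfield_def)
  then have "card {0::'a,1} \<le> card K" using assms(2) by (rule card_mono[rotated])
  then show ?thesis by simp
qed

lemma subfield_diff: "is_subfield K \<Longrightarrow> x \<in> K \<Longrightarrow> y \<in> K \<Longrightarrow> x - y \<in> K"
  unfolding is_subfield_def by (metis diff_conv_add_uminus)

definition indep_gen :: "'a::field set \<Rightarrow> (nat \<Rightarrow> nat \<Rightarrow> 'a) \<Rightarrow> nat set \<Rightarrow> nat set \<Rightarrow> bool" where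
  "indep_gen K M R S \<longleftrightarrow>
     (\<forall>a. (\<forall>j\<in>S. a j \<in> K) \<and> (\<forall>i\<in>R. (\<Sum>j\<in>S. a j * M i j) = 0) \<longrightarrow> (\<forall>j\<in>S. a j = 0))"

lemma indep_cols_gen: "indep_cols K M r S = indep_gen K M {..<r} S"
  unfolding indep_cols_def indep_gen_def by (simp only: Ball_def lessThan_iff)

lemma inj_lin:
  assumes sf: "is_subfield K" and ind: "indep_gen K M R S"
  shows "inj_on (\<lambda>a. \<lambda>i. if i \<in> R then (\<Sum>j\<in>S. a j * M i j) else 0) (Wv K S)"
proof (rule inj_onI)
  fix a b assume a: "a \<in> Wv K S" and b: "b \<in> Wv K S"
    and e: "(\<lambda>i. if i \<in> R then (\<Sum>j\<in>S. a j * M i j) else 0) = (\<lambda>i. if i \<in> R then (\<Sum>j\<in>S. b j * M i j) else 0)"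
  define c where "c = (\<lambda>j. a j - b j)"
  have 1: "\<forall>i\<in>R. (\<Sum>j\<in>S. c j * M i j) = 0"
  proof
    fix i assume "i \<in> R"
    then have "(\<Sum>j\<in>S. a j * M i j) = (\<Sum>j\<in>S. b j * M i j)" using fun_cong[OF e, of i] by simp
    then show "(\<Sum>j\<in>S. c j * M i j) = 0"
      by (simp add: c_def left_diff_distrib sum_subtractf)
  qed
  have 2: "\<forall>j\<in>S. c j \<in> K" using a b sf unfolding c_def Wv_def by (auto intro: subfield_diff)
  have 3: "\<forall>j\<in>S. c j = 0" using ind 1 2 unfolding indep_gen_def by blast
  show "a = b"
  proof
    fix j show "a j = b j"
    proof (cases "j \<in> S")
      case True then show ?thesis using 3 unfolding c_def by simp
    next
      case False then show ?thesis using a b unfolding Wv_def by simp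
    qed
  qed
qed

lemma subfield_sum:
  assumes "is_subfield K" "\<forall>j\<in>S. f j \<in> K"
  shows "sum f S \<in> K"
proof (cases "finite S")
  case True
  then show ?thesis using assms(2)
  proof (induction S rule: finite_induct)
    case empty then show ?case using assms(1) by (simp add: is_subfield_def)
  next
    case (insert x S')
    then show ?case using assms(1) unfolding is_subfield_def by simp
  qed
next
  case False then show ?thesis using assms(1) by (simp add: is_subfield_def)
qed

lemma subfield_mult: "is_subfield K \<Longrightarrow> x \<in> K \<Longrightarrow> y \<in> K \<Longrightarrow> x * y \<in> K"
  unfolding is_subfield_def by blast

lemma indep_bound:
  assumes sf: "is_subfield K" "finite K" and fin: "finite R" "finite S"
    and ent: "\<forall>i\<in>R. \<forall>j\<in>S. M i j \<in> K" and ind: "indep_gen K M R S"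
  shows "card S \<le> card R"
proof -
  let ?f = "\<lambda>a. \<lambda>i. if i \<in> R then (\<Sum>j\<in>S. a j * M i j) else 0"
  have sub: "?f ` Wv K S \<subseteq> Wv K R"
  proof
    fix v assume "v \<in> ?f ` Wv K S"
    then obtain a where a: "a \<in> Wv K S" and v: "v = ?f a" by blast
    have "\<forall>i\<in>R. (\<Sum>j\<in>S. a j * M i j) \<in> K"
    proof
      fix i assume i: "i \<in> R"
      have "\<forall>j\<in>S. a j * M i j \<in> K" using a i ent sf(1) unfolding Wv_def by (auto intro: subfield_mult)
      then show "(\<Sum>j\<in>S. a j * M i j) \<in> K" using sf(1) by (rule subfield_sum[rotated])
    qed
    then show "v \<in> Wv K R" using v by (auto simp: Wv_def)
  qed
  have "card (?f ` Wv K S) \<le> card (Wv K R)"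
    using sub card_Wv[OF fin(1) sf(2)] by (intro card_mono) auto
  moreover have "card (?f ` Wv K S) = card (Wv K S)"
    using inj_lin[OF sf(1) ind] by (rule card_image)
  ultimately have "card K ^ card S \<le> card K ^ card R"
    using card_Wv[OF fin(1) sf(2)] card_Wv[OF fin(2) sf(2)] by simp
  moreover have "1 < card K" using subfield_card2[OF sf] by simp
  ultimately show ?thesis using power_le_imp_le_exp by blast
qed

lemma mr_set:
  "finite {card S | S. S \<subseteq> {..<c} \<and> indep_cols K M r S}"
  "card {} \<in> {card S | S. S \<subseteq> {..<c} \<and> indep_cols K M r S}"
proof -
  have "{card S | S. S \<subseteq> {..<c} \<and> indep_cols K M r S} \<subseteq> {..c}"
  proof
    fix x assume "x \<in> {card S | S. S \<subseteq> {..<c} \<and> indep_cols K M r S}"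
    then obtain S where "x = card S" "S \<subseteq> {..<c}" by blast
    then have "x \<le> card {..<c}" using card_mono[of "{..<c}" S] by simp
    then show "x \<in> {..c}" by simp
  qed
  then show "finite {card S | S. S \<subseteq> {..<c} \<and> indep_cols K M r S}" by (rule finite_subset) simp
  show "card {} \<in> {card S | S. S \<subseteq> {..<c} \<and> indep_cols K M r S}"
    unfolding indep_cols_def by (intro CollectI exI[of _ "{}"]) simp
qed

lemma mr_ge:
  assumes "S \<subseteq> {..<c}" "indep_cols K M r S"
  shows "card S \<le> mat_rank K M r c"
proof -
  have "card S \<in> {card S | S. S \<subseteq> {..<c} \<and> indep_cols K M r S}"
    using assms by (intro CollectI exI[of _ S]) simp
  then show ?thesis unfolding mat_rank_def by (rule Max_ge[OF mr_set(1)])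
qed

lemma mr_obtain: "\<exists>S. S \<subseteq> {..<c} \<and> indep_cols K M r S \<and> card S = mat_rank K M r c"
proof -
  have ne: "{card S | S. S \<subseteq> {..<c} \<and> indep_cols K M r S} \<noteq> {}"
  proof
    assume "{card S | S. S \<subseteq> {..<c} \<and> indep_cols K M r S} = {}"
    then show False using mr_set(2)[of c K M r] by (simp, blast)
  qed
  have "mat_rank K M r c \<in> {card S | S. S \<subseteq> {..<c} \<and> indep_cols K M r S}"
    unfolding mat_rank_def by (rule Max_in[OF mr_set(1) ne])
  then obtain S where S: "mat_rank K M r c = card S \<and> (S \<subseteq> {..<c} \<and> indep_cols K M r S)"
    by (rule CollectE) (elim exE)
  show ?thesis
    apply (rule exI[of _ S])
    using S by simp
qed

lemma mr_le:
  assumes "is_subfield K" "finite K" "\<forall>i<r. \<forall>j<c. M i j \<in> K"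
  shows "mat_rank K M r c \<le> r"
proof -
  obtain S where S: "S \<subseteq> {..<c}" "indep_cols K M r S" "card S = mat_rank K M r c"
    using mr_obtain by blast
  have fS: "finite S" using finite_subset[OF S(1)] by simp
  have ent: "\<forall>i\<in>{..<r}. \<forall>j\<in>S. M i j \<in> K" using assms(3) S(1) by blast
  have "card S \<le> card {..<r}"
    using indep_bound[OF assms(1,2) _ fS ent] S(2) by (simp add: indep_cols_gen)
  then show ?thesis using S by simp
qed


lemma sum_swap_mult:
  "(\<Sum>i\<in>I. x i * (\<Sum>s\<in>S. a s * A i s)) = (\<Sum>s\<in>S. a s * (\<Sum>i\<in>I. x i * (A i s::'a::comm_ring_1)))"
proof -
  have "(\<Sum>i\<in>I. x i * (\<Sum>s\<in>S. a s * A i s)) = (\<Sum>i\<in>I. \<Sum>s\<in>S. x i * (a s * A i s))"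
    by (simp add: sum_distrib_left)
  also have "\<dots> = (\<Sum>s\<in>S. \<Sum>i\<in>I. x i * (a s * A i s))" by (rule sum.swap)
  also have "\<dots> = (\<Sum>s\<in>S. a s * (\<Sum>i\<in>I. x i * A i s))" by (simp add: sum_distrib_left mult_ac)
  finally show ?thesis .
qed

lemma mr_span:
  assumes sf: "is_subfield K" and S: "S \<subseteq> {..<c}" "indep_cols K M r S" "card S = mat_rank K M r c"
    and j: "j < c"
  shows "\<exists>b\<in>Wv K S. \<forall>i<r. M i j = (\<Sum>s\<in>S. b s * M i s)"
proof (cases "j \<in> S")
  case True
  let ?b = "\<lambda>s. if s = j then 1 else 0"
  have K01: "0 \<in> K" "1 \<in> K" using sf by (simp_all add: is_subfield_def)
  have "?b \<in> Wv K S" unfolding Wv_def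
  proof (intro CollectI conjI ballI allI impI)
    fix i show "?b i \<in> K" using K01 by (cases "i = j") simp_all
  next
    fix i assume "i \<notin> S" then show "?b i = 0" using True by auto
  qed
  moreover have "\<forall>i<r. M i j = (\<Sum>s\<in>S. ?b s * M i s)"
  proof (intro allI impI)
    fix i assume "i<r"
    have "(\<Sum>s\<in>S. ?b s * M i s) = (\<Sum>s\<in>S. if s = j then M i s else 0)" by (rule sum.cong) auto
    also have "\<dots> = M i j" using True finite_subset[OF S(1)] by simp
    finally show "M i j = (\<Sum>s\<in>S. ?b s * M i s)" by simp
  qed
  ultimately show ?thesis by (intro bexI[of _ ?b])
next
  case False
  have fS: "finite S" using finite_subset[OF S(1)] by simp
  have "\<not> indep_cols K M r (insert j S)"
  proof
    assume "indep_cols K M r (insert j S)"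
    moreover have "insert j S \<subseteq> {..<c}" using S(1) j by simp
    ultimately have "card (insert j S) \<le> mat_rank K M r c" by (intro mr_ge)
    then show False using False fS S(3) by simp
  qed
  then obtain a where aK: "\<forall>t\<in>insert j S. a t \<in> K"
      and a0: "\<forall>i<r. (\<Sum>t\<in>insert j S. a t * M i t) = 0" and nz: "\<exists>t\<in>insert j S. a t \<noteq> 0"
    unfolding indep_cols_def by blast
  have sumeq: "\<forall>i<r. a j * M i j + (\<Sum>t\<in>S. a t * M i t) = 0" using a0 False fS by simp
  have aj: "a j \<noteq> 0"
  proof
    assume aj0: "a j = 0"
    then have "\<forall>i<r. (\<Sum>t\<in>S. a t * M i t) = 0" using sumeq by simp
    moreover have "\<forall>t\<in>S. a t \<in> K" using aK by simp
    ultimately have "\<forall>t\<in>S. a t = 0" using S(2) unfolding indep_cols_def by blast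
    then show False using nz aj0 by blast
  qed
  define b where "b = (\<lambda>s. if s \<in> S then - a s * inverse (a j) else 0)"
  have "\<forall>s\<in>S. - a s * inverse (a j) \<in> K"
  proof
    fix s assume "s \<in> S"
    then have "a s \<in> K" "a j \<in> K" using aK by auto
    then have "- a s \<in> K" "inverse (a j) \<in> K" using sf unfolding is_subfield_def by simp_all
    then show "- a s * inverse (a j) \<in> K" using sf by (rule subfield_mult[rotated 1])
  qed
  then have "b \<in> Wv K S" unfolding b_def Wv_def by auto
  moreover have "\<forall>i<r. M i j = (\<Sum>s\<in>S. b s * M i s)"
  proof (intro allI impI)
    fix i assume i: "i<r"
    have "(\<Sum>s\<in>S. b s * M i s) = (\<Sum>s\<in>S. - inverse (a j) * (a s * M i s))"
      unfolding b_def by (rule sum.cong) auto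
    also have "\<dots> = - inverse (a j) * (\<Sum>s\<in>S. a s * M i s)" by (simp add: sum_distrib_left)
    also have "(\<Sum>s\<in>S. a s * M i s) = - (a j * M i j)"
    proof -
      have "a j * M i j + (\<Sum>t\<in>S. a t * M i t) = 0" using sumeq i by simp
      then show ?thesis by (simp add: eq_neg_iff_add_eq_0 add.commute)
    qed
    also have "- inverse (a j) * - (a j * M i j) = M i j" using aj by simp
    finally show "M i j = (\<Sum>s\<in>S. b s * M i s)" by simp
  qed
  ultimately show ?thesis by (intro bexI[of _ b])
qed

lemma surj_of_indep:
  fixes N :: "nat \<Rightarrow> nat \<Rightarrow> 'a::{finite,field}"
  assumes fS: "finite S" and ind: "indep_cols UNIV N r S" and cS: "card S = r"
  shows "\<forall>z\<in>vecs r. \<exists>a\<in>Wv UNIV S. \<forall>l<r. (\<Sum>s\<in>S. a s * N l s) = z l"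
proof -
  let ?f = "\<lambda>a. \<lambda>i. if i \<in> {..<r} then (\<Sum>j\<in>S. a j * N i j) else 0"
  have inj: "inj_on ?f (Wv UNIV S)"
    using inj_lin[OF subfield_UNIV, of N "{..<r}" S] ind by (simp add: indep_cols_gen)
  have sub: "?f ` Wv UNIV S \<subseteq> vecs r" by (auto simp: vecs_def)
  have "card (?f ` Wv UNIV S) = card (vecs r :: (nat \<Rightarrow> 'a) set)"
    using card_image[OF inj] card_Wv[OF fS, of "UNIV::'a set"] card_vecs[where 'a='a] cS by simp
  then have eq: "?f ` Wv UNIV S = vecs r" using card_subset_eq[OF finite_vecs sub] by simp
  show ?thesis
  proof
    fix z :: "nat \<Rightarrow> 'a" assume "z \<in> vecs r"
    then have "z \<in> ?f ` Wv UNIV S" using eq by simp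
    then obtain a where a: "a \<in> Wv UNIV S" "z = ?f a" by (rule imageE)
    then show "\<exists>a\<in>Wv UNIV S. \<forall>l<r. (\<Sum>s\<in>S. a s * N l s) = z l"
      by (intro bexI[of _ a]) simp_all
  qed
qed

lemma rows_indep:
  fixes A :: "nat \<Rightarrow> nat \<Rightarrow> 'a::{finite,field}"
  assumes rk: "mat_rank UNIV A k n = k" and x: "x \<in> vecs k"
    and xA: "\<forall>j<n. (\<Sum>i<k. x i * A i j) = 0"
  shows "x = (\<lambda>_. 0)"
proof
  fix l show "x l = 0"
  proof (cases "l < k")
    case False then show ?thesis using x by (simp add: vecs_def)
  next
    case True
    obtain S where S: "S \<subseteq> {..<n}" "indep_cols UNIV A k S" "card S = mat_rank UNIV A k n"
      using mr_obtain by blast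
    have fS: "finite S" using finite_subset[OF S(1)] by simp
    define z where "z = (\<lambda>i. if i = l then (1::'a) else 0)"
    have "z \<in> vecs k" using True by (simp add: vecs_def z_def)
    moreover have "\<forall>z\<in>vecs k. \<exists>a\<in>Wv UNIV S. \<forall>l<k. (\<Sum>s\<in>S. a s * A l s) = z l"
      using surj_of_indep[OF fS S(2)] S(3) rk by simp
    ultimately obtain a where a: "\<forall>i<k. (\<Sum>s\<in>S. a s * A i s) = z i" by blast
    have "(\<Sum>i<k. x i * z i) = (\<Sum>i<k. if i = l then x i else 0)"
      by (intro sum.cong) (simp_all add: z_def)
    also have "\<dots> = x l" using True by simp
    finally have "x l = (\<Sum>i<k. x i * z i)" by simp
    also have "\<dots> = (\<Sum>i<k. x i * (\<Sum>s\<in>S. a s * A i s))" using a by simp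
    also have "\<dots> = (\<Sum>s\<in>S. a s * (\<Sum>i<k. x i * A i s))" by (rule sum_swap_mult)
    also have "\<dots> = 0" using xA S(1) by (intro sum.neutral) auto
    finally show ?thesis .
  qed
qed

lemma cols_surj:
  fixes N :: "nat \<Rightarrow> nat \<Rightarrow> 'a::{finite,field}"
  assumes h: "\<forall>y\<in>vecs r. (\<forall>j<c. (\<Sum>l<r. y l * N l j) = 0) \<longrightarrow> y = (\<lambda>_. 0)"
  shows "\<forall>z\<in>vecs r. \<exists>x\<in>vecs c. \<forall>l<r. (\<Sum>j<c. N l j * x j) = z l"
proof -
  obtain S where S: "S \<subseteq> {..<c}" "indep_cols UNIV N r S" "card S = mat_rank UNIV N r c"
    using mr_obtain by blast
  have fS: "finite S" using finite_subset[OF S(1)] by simp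
  have fU: "finite (UNIV::'a set)" by simp
  have le: "card S \<le> r" using mr_le[OF subfield_UNIV fU, of r c N] S(3) by simp
  have ge: "r \<le> card S"
  proof (rule ccontr)
    assume lt: "\<not> r \<le> card S"
    have "\<not> indep_gen UNIV (\<lambda>j l. N l j) S {..<r}"
    proof
      assume ind: "indep_gen UNIV (\<lambda>j l. N l j) S {..<r}"
      have "card {..<r} \<le> card S"
        by (rule indep_bound[OF subfield_UNIV fU fS finite_lessThan _ ind]) simp
      then show False using lt by simp
    qed
    then obtain y where y0: "\<forall>i\<in>S. (\<Sum>l\<in>{..<r}. y l * N l i) = 0" and ynz: "\<exists>l\<in>{..<r}. y l \<noteq> 0"
      unfolding indep_gen_def by blast
    define y' where "y' = (\<lambda>l. if l < r then y l else 0)"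
    have y'v: "y' \<in> vecs r" by (simp add: y'_def vecs_def)
    have "\<forall>j<c. (\<Sum>l<r. y' l * N l j) = 0"
    proof (intro allI impI)
      fix j assume j: "j < c"
      obtain b where b: "b \<in> Wv UNIV S" "\<forall>i<r. N i j = (\<Sum>s\<in>S. b s * N i s)"
        using mr_span[OF subfield_UNIV S j] by blast
      have "(\<Sum>l<r. y' l * N l j) = (\<Sum>l<r. y l * (\<Sum>s\<in>S. b s * N l s))"
        using b(2) by (intro sum.cong) (simp_all add: y'_def)
      also have "\<dots> = (\<Sum>s\<in>S. b s * (\<Sum>l<r. y l * N l s))" by (rule sum_swap_mult)
      also have "\<dots> = 0" using y0 by simp
      finally show "(\<Sum>l<r. y' l * N l j) = 0" .
    qed
    then have "y' = (\<lambda>_. 0)" using h y'v by blast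
    then show False using ynz unfolding y'_def by (metis lessThan_iff)
  qed
  have cS: "card S = r" using le ge by simp
  show ?thesis
  proof
    fix z :: "nat \<Rightarrow> 'a" assume z: "z \<in> vecs r"
    obtain a where a: "a \<in> Wv UNIV S" "\<forall>l<r. (\<Sum>s\<in>S. a s * N l s) = z l"
      using surj_of_indep[OF fS S(2) cS] z by blast
    have "a \<in> vecs c" using a(1) S(1) by (auto simp: Wv_def vecs_def)
    moreover have "\<forall>l<r. (\<Sum>j<c. N l j * a j) = z l"
    proof (intro allI impI)
      fix l assume l: "l<r"
      have "(\<Sum>j<c. N l j * a j) = (\<Sum>s\<in>S. a s * N l s)"
        using S(1) a(1) by (intro sum.mono_neutral_cong_right) (auto simp: Wv_def)
      then show "(\<Sum>j<c. N l j * a j) = z l" using a(2) l by simp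
    qed
    ultimately show "\<exists>x\<in>vecs c. \<forall>l<r. (\<Sum>j<c. N l j * x j) = z l" by (intro bexI[of _ a])
  qed
qed

lemma phi_add: "is_coord_iso F m phi \<Longrightarrow> phi (x + y) = (\<lambda>i. phi x i + phi y i)"
  unfolding is_coord_iso_def by blast

lemma phi_smul: "is_coord_iso F m phi \<Longrightarrow> a \<in> F \<Longrightarrow> phi (a * x) = (\<lambda>i. a * phi x i)"
  unfolding is_coord_iso_def by blast

lemma phi_zero:
  assumes "is_coord_iso F m phi" shows "phi 0 = (\<lambda>i. 0)"
proof
  fix i
  have "phi (0 + 0) = (\<lambda>i. phi 0 i + phi 0 i)" by (rule phi_add[OF assms])
  then have "phi 0 i = phi 0 i + phi 0 i" by (metis add_0)
  then show "phi 0 i = 0" by (metis add_cancel_right_right)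
qed

lemma phi_inj:
  assumes "is_coord_iso F m phi" "phi x = phi y" shows "x = y"
proof -
  have "inj_on phi UNIV" using assms(1) unfolding is_coord_iso_def by (blast dest: bij_betw_imp_inj_on)
  then show ?thesis using assms(2) by (simp add: inj_on_def)
qed

lemma phi_range:
  assumes "is_coord_iso F m phi"
  shows "i < m \<Longrightarrow> phi x i \<in> F" "m \<le> i \<Longrightarrow> phi x i = 0"
proof -
  have "phi ` UNIV = {v. \<forall>i. (i < m \<longrightarrow> v i \<in> F) \<and> (m \<le> i \<longrightarrow> v i = 0)}"
    using assms unfolding is_coord_iso_def by (blast dest: bij_betw_imp_surj_on)
  then have "phi x \<in> {v. \<forall>i. (i < m \<longrightarrow> v i \<in> F) \<and> (m \<le> i \<longrightarrow> v i = 0)}" by blast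
  then show "i < m \<Longrightarrow> phi x i \<in> F" "m \<le> i \<Longrightarrow> phi x i = 0" by auto
qed

lemma phi_sum:
  assumes iso: "is_coord_iso F m phi" and fin: "finite S" and aF: "\<forall>j\<in>S. a j \<in> F"
  shows "phi (\<Sum>j\<in>S. a j * c j) = (\<lambda>i. \<Sum>j\<in>S. a j * phi (c j) i)"
  using fin aF
proof (induction S rule: finite_induct)
  case empty then show ?case using phi_zero[OF iso] by simp
next
  case (insert x S)
  have "phi (\<Sum>j\<in>insert x S. a j * c j) = phi (a x * c x + (\<Sum>j\<in>S. a j * c j))"
    using insert(1,2) by simp
  also have "\<dots> = (\<lambda>i. phi (a x * c x) i + phi (\<Sum>j\<in>S. a j * c j) i)" by (rule phi_add[OF iso])
  also have "phi (a x * c x) = (\<lambda>i. a x * phi (c x) i)" using insert(4) by (simp add: phi_smul[OF iso])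
  also have "phi (\<Sum>j\<in>S. a j * c j) = (\<lambda>i. \<Sum>j\<in>S. a j * phi (c j) i)" using insert(3,4) by simp
  finally show ?case using insert(1,2) by simp
qed

lemma indep_phi:
  assumes iso: "is_coord_iso F m phi" and fin: "finite S"
  shows "indep_cols F (Phi phi c) m S \<longleftrightarrow>
    (\<forall>a. (\<forall>j\<in>S. a j \<in> F) \<and> (\<Sum>j\<in>S. a j * c j) = 0 \<longrightarrow> (\<forall>j\<in>S. a j = 0))"
proof -
  have key: "(\<forall>i<m. (\<Sum>j\<in>S. a j * Phi phi c i j) = 0) \<longleftrightarrow> (\<Sum>j\<in>S. a j * c j) = 0"
    if aF: "\<forall>j\<in>S. a j \<in> F" for a
  proof
    assume h: "\<forall>i<m. (\<Sum>j\<in>S. a j * Phi phi c i j) = 0"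
    have "phi (\<Sum>j\<in>S. a j * c j) = (\<lambda>i. \<Sum>j\<in>S. a j * phi (c j) i)" by (rule phi_sum[OF iso fin aF])
    also have "\<dots> = (\<lambda>i. 0)"
    proof
      fix i show "(\<Sum>j\<in>S. a j * phi (c j) i) = 0"
      proof (cases "i < m")
        case True then show ?thesis using h by (simp add: Phi_def)
      next
        case False then show ?thesis using phi_range(2)[OF iso] by simp
      qed
    qed
    also have "\<dots> = phi 0" using phi_zero[OF iso] by simp
    finally show "(\<Sum>j\<in>S. a j * c j) = 0" by (rule phi_inj[OF iso])
  next
    assume h: "(\<Sum>j\<in>S. a j * c j) = 0"
    have "(\<lambda>i. \<Sum>j\<in>S. a j * phi (c j) i) = phi (\<Sum>j\<in>S. a j * c j)" by (rule phi_sum[OF iso fin aF, symmetric])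
    also have "\<dots> = (\<lambda>i. 0)" using h phi_zero[OF iso] by simp
    finally show "\<forall>i<m. (\<Sum>j\<in>S. a j * Phi phi c i j) = 0" by (simp add: Phi_def fun_eq_iff)
  qed
  show ?thesis
  proof
    assume ind: "indep_cols F (Phi phi c) m S"
    show "\<forall>a. (\<forall>j\<in>S. a j \<in> F) \<and> (\<Sum>j\<in>S. a j * c j) = 0 \<longrightarrow> (\<forall>j\<in>S. a j = 0)"
    proof (intro allI impI)
      fix a assume "(\<forall>j\<in>S. a j \<in> F) \<and> (\<Sum>j\<in>S. a j * c j) = 0"
      then show "\<forall>j\<in>S. a j = 0" using key[of a] ind unfolding indep_cols_def by blast
    qed
  next
    assume ind: "\<forall>a. (\<forall>j\<in>S. a j \<in> F) \<and> (\<Sum>j\<in>S. a j * c j) = 0 \<longrightarrow> (\<forall>j\<in>S. a j = 0)"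
    show "indep_cols F (Phi phi c) m S" unfolding indep_cols_def
    proof (intro allI impI)
      fix a assume "(\<forall>j\<in>S. a j \<in> F) \<and> (\<forall>i<m. (\<Sum>j\<in>S. a j * Phi phi c i j) = 0)"
      then show "\<forall>j\<in>S. a j = 0" using key[of a] ind by blast
    qed
  qed
qed

lemma rank_bound:
  fixes A :: "nat \<Rightarrow> nat \<Rightarrow> 'a::{finite,field}" and F :: "'a set"
  assumes sf: "is_subfield F" and iso: "is_coord_iso F m phi"
    and AF: "\<forall>i<k. \<forall>j<n. A i j \<in> F" and rk: "mat_rank UNIV A k n = k"
    and orth: "\<forall>i<k. (\<Sum>j<n. A i j * c j) = 0"
  shows "rank_wt F m phi n c + k \<le> n"
proof -
  obtain S where S: "S \<subseteq> {..<n}" "indep_cols F (Phi phi c) m S" "card S = rank_wt F m phi n c"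
    unfolding rank_wt_def using mr_obtain by blast
  have fS: "finite S" using finite_subset[OF S(1)] by simp
  have sind: "\<forall>a. (\<forall>j\<in>S. a j \<in> F) \<and> (\<Sum>j\<in>S. a j * c j) = 0 \<longrightarrow> (\<forall>j\<in>S. a j = 0)"
    using S(2) indep_phi[OF iso fS] by blast
  have fF: "finite F" by simp
  have F0: "0 \<in> F" using sf by (simp add: is_subfield_def)
  define Psi :: "(nat \<Rightarrow> 'a) \<times> (nat \<Rightarrow> 'a) \<Rightarrow> nat \<Rightarrow> 'a" where
    "Psi = (\<lambda>(w,a). \<lambda>j. if j < n then (\<Sum>i<k. w i * A i j) + a j else 0)"
  have sub: "Psi ` (Wv F {..<k} \<times> Wv F S) \<subseteq> Wv F {..<n}"
  proof
    fix v assume "v \<in> Psi ` (Wv F {..<k} \<times> Wv F S)"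
    then obtain w a where wa: "w \<in> Wv F {..<k}" "a \<in> Wv F S" "v = Psi (w,a)" by blast
    have "\<forall>j\<in>{..<n}. v j \<in> F"
    proof
      fix j assume j: "j \<in> {..<n}"
      have "\<forall>i\<in>{..<k}. w i * A i j \<in> F" using wa(1) AF j sf by (auto simp: Wv_def intro: subfield_mult)
      then have s: "(\<Sum>i<k. w i * A i j) \<in> F" using sf by (rule subfield_sum[rotated])
      have "a j \<in> F" using wa(2) F0 by (cases "j \<in> S") (auto simp: Wv_def)
      then have "(\<Sum>i<k. w i * A i j) + a j \<in> F" using s sf unfolding is_subfield_def by blast
      then show "v j \<in> F" using wa(3) j by (simp add: Psi_def)
    qed
    moreover have "\<forall>j. j \<notin> {..<n} \<longrightarrow> v j = 0" using wa(3) by (simp add: Psi_def)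
    ultimately show "v \<in> Wv F {..<n}" by (simp add: Wv_def)
  qed
  have inj: "inj_on Psi (Wv F {..<k} \<times> Wv F S)"
  proof (rule inj_onI, clarify)
    fix w a w' a' assume w: "w \<in> Wv F {..<k}" and a: "a \<in> Wv F S"
      and w': "w' \<in> Wv F {..<k}" and a': "a' \<in> Wv F S" and e: "Psi (w, a) = Psi (w', a')"
    define u where "u = (\<lambda>i. w i - w' i)"
    define b where "b = (\<lambda>j. a j - a' j)"
    have e2: "\<forall>j<n. (\<Sum>i<k. u i * A i j) + b j = 0"
    proof (intro allI impI)
      fix j assume j: "j < n"
      have "(\<Sum>i<k. w i * A i j) + a j = (\<Sum>i<k. w' i * A i j) + a' j"
        using fun_cong[OF e, of j] j by (simp add: Psi_def)
      then show "(\<Sum>i<k. u i * A i j) + b j = 0"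
        by (simp add: u_def b_def left_diff_distrib sum_subtractf algebra_simps)
    qed
    have "(\<Sum>j<n. ((\<Sum>i<k. u i * A i j) + b j) * c j) = 0" using e2 by simp
    moreover have "(\<Sum>j<n. ((\<Sum>i<k. u i * A i j) + b j) * c j)
        = (\<Sum>j<n. c j * (\<Sum>i<k. u i * A i j)) + (\<Sum>j<n. b j * c j)"
      by (simp add: sum.distrib algebra_simps)
    moreover have "(\<Sum>j<n. c j * (\<Sum>i<k. u i * A i j)) = (\<Sum>i<k. u i * (\<Sum>j<n. c j * A i j))"
      by (rule sum_swap_mult)
    moreover have "(\<Sum>i<k. u i * (\<Sum>j<n. c j * A i j)) = 0"
      using orth by (intro sum.neutral) (simp add: mult.commute)
    ultimately have sb: "(\<Sum>j<n. b j * c j) = 0" by simp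
    have "(\<Sum>j<n. b j * c j) = (\<Sum>j\<in>S. b j * c j)"
      using S(1) a a' by (intro sum.mono_neutral_cong_right) (auto simp: Wv_def b_def)
    then have "(\<Sum>j\<in>S. b j * c j) = 0" using sb by simp
    moreover have "\<forall>j\<in>S. b j \<in> F" using a a' sf by (auto simp: Wv_def b_def intro: subfield_diff)
    ultimately have "\<forall>j\<in>S. b j = 0" using sind by blast
    then have aa: "a = a'" using a a' by (auto simp: Wv_def b_def fun_eq_iff)
    then have "\<forall>j<n. (\<Sum>i<k. u i * A i j) = 0" using e2 by (simp add: b_def)
    moreover have "u \<in> vecs k" using w w' by (simp add: Wv_def vecs_def u_def)
    ultimately have "u = (\<lambda>_. 0)" using rows_indep[OF rk] by blast
    then have "w = w'" by (simp add: u_def fun_eq_iff)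
    then show "w = w' \<and> a = a'" using aa by simp
  qed
  have "card (Wv F {..<k} \<times> Wv F S) \<le> card (Wv F {..<n})"
    using card_inj_on_le[OF inj sub] card_Wv[OF finite_lessThan fF] by simp
  then have "card F ^ k * card F ^ card S \<le> card F ^ n"
    using card_Wv[OF finite_lessThan fF] card_Wv[OF fS fF] by (simp add: card_cartesian_product)
  then have "card F ^ (k + card S) \<le> card F ^ n" by (simp add: power_add)
  moreover have "1 < card F" using subfield_card2[OF sf fF] by simp
  ultimately have "k + card S \<le> n" using power_le_imp_le_exp by blast
  then show ?thesis using S(3) by simp
qed

lemma bilin:
  "(\<Sum>i\<in>I. x i * (\<Sum>j\<in>J. M i j * v j)) = (\<Sum>j\<in>J. (\<Sum>i\<in>I. x i * M i j) * (v j::'a::comm_ring_1))"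
proof -
  have "(\<Sum>i\<in>I. x i * (\<Sum>j\<in>J. M i j * v j)) = (\<Sum>i\<in>I. \<Sum>j\<in>J. x i * (M i j * v j))"
    by (simp add: sum_distrib_left)
  also have "\<dots> = (\<Sum>j\<in>J. \<Sum>i\<in>I. x i * (M i j * v j))" by (rule sum.swap)
  also have "\<dots> = (\<Sum>j\<in>J. (\<Sum>i\<in>I. x i * M i j) * v j)" by (simp add: sum_distrib_left sum_distrib_right mult_ac)
  finally show ?thesis .
qed

lemma map_pmf_uniform:
  assumes fV: "finite V" and img: "g ` V = Y" and Vne: "V \<noteq> {}"
    and fib: "\<forall>y\<in>Y. \<forall>y'\<in>Y. card {x\<in>V. g x = y} \<le> card {x\<in>V. g x = y'}"
  shows "map_pmf g (pmf_of_set V) = pmf_of_set Y"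
proof -
  have fY: "finite Y" using img fV by blast
  have Yne: "Y \<noteq> {}" using img Vne by blast
  obtain y0 where y0: "y0 \<in> Y" using Yne by blast
  define N where "N = card {x\<in>V. g x = y0}"
  have fibN: "\<forall>y\<in>Y. card {x\<in>V. g x = y} = N"
    using fib y0 unfolding N_def by (meson antisym)
  have eqV: "V = (\<Union>y\<in>Y. {x\<in>V. g x = y})" using img by blast
  have cU: "card (\<Union>y\<in>Y. {x\<in>V. g x = y}) = (\<Sum>y\<in>Y. card {x\<in>V. g x = y})"
    by (rule card_UN_disjoint) (use fY fV in auto)
  have "card V = card (\<Union>y\<in>Y. {x\<in>V. g x = y})" using eqV by (rule arg_cong[where f=card])
  then have "card V = (\<Sum>y\<in>Y. card {x\<in>V. g x = y})" using cU by (rule trans)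
  then have cV: "card V = card Y * N" using fibN by simp
  have cVpos: "card V > 0" using fV Vne by (simp add: card_gt_0_iff)
  show ?thesis
  proof (rule pmf_eqI)
    fix y
    have "pmf (map_pmf g (pmf_of_set V)) y = card (V \<inter> g -` {y}) / card V"
      using fV Vne by (simp add: pmf_map measure_pmf_of_set)
    also have "V \<inter> g -` {y} = {x\<in>V. g x = y}" by blast
    finally have p: "pmf (map_pmf g (pmf_of_set V)) y = card {x\<in>V. g x = y} / card V" .
    show "pmf (map_pmf g (pmf_of_set V)) y = pmf (pmf_of_set Y) y"
    proof (cases "y \<in> Y")
      case True
      then have "card {x\<in>V. g x = y} = N" using fibN by blast
      then have "pmf (map_pmf g (pmf_of_set V)) y = N / (card Y * N)" using p cV by simp
      also have "\<dots> = 1 / card Y" using cV cVpos by (simp add: field_simps)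
      finally show ?thesis using True fY Yne by simp
    next
      case False
      then have "{x\<in>V. g x = y} = {}" using img by blast
      then have "card {x\<in>V. g x = y} = 0" by (simp only: card.empty)
      then show ?thesis using p False fY Yne by simp
    qed
  qed
qed

lemma dir1:
  fixes F :: "'a::{finite,field} set" and G :: "nat \<Rightarrow> nat \<Rightarrow> 'a"
  assumes sf: "is_subfield F" and iso: "is_coord_iso F m phi" and gen: "is_rank_code_gen F m phi G n kt d"
  shows "restricted_extractor F (mat_vec G kt n) n kt (n - d + 1)"
  unfolding restricted_extractor_def
proof (intro allI impI)
  fix k and A :: "nat \<Rightarrow> nat \<Rightarrow> 'a" and \<beta> :: "nat \<Rightarrow> 'a"
  assume H: "n - d + 1 \<le> k \<and> (\<forall>i<k. \<forall>j<n. A i j \<in> F) \<and> mat_rank UNIV A k n = k \<and> \<beta> \<in> vecs n"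
  then have kge: "n - d + 1 \<le> k" and AF: "\<forall>i<k. \<forall>j<n. A i j \<in> F" and rkA: "mat_rank UNIV A k n = k"
    by auto
  have rkG: "mat_rank UNIV G kt n = kt"
    and dmin: "\<forall>c\<in>code_of G kt n. c \<noteq> (\<lambda>_. 0) \<longrightarrow> d \<le> rank_wt F m phi n c"
    using gen unfolding is_rank_code_gen_def by auto
  define h where "h = (\<lambda>x::nat\<Rightarrow>'a. \<lambda>j. vec_mat x A k n j + \<beta> j)"
  have inj_h: "inj_on h (vecs k)"
  proof (rule inj_onI)
    fix x x' assume x: "x \<in> vecs k" and x': "x' \<in> vecs k" and e: "h x = h x'"
    define u where "u = (\<lambda>i. x i - x' i)"
    have "\<forall>j<n. (\<Sum>i<k. u i * A i j) = 0"
    proof (intro allI impI)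
      fix j assume j: "j<n"
      have "vec_mat x A k n j = vec_mat x' A k n j" using fun_cong[OF e, of j] by (simp add: h_def)
      then have "(\<Sum>i<k. x i * A i j) = (\<Sum>i<k. x' i * A i j)" using j by (simp add: vec_mat_def)
      then show "(\<Sum>i<k. u i * A i j) = 0" by (simp add: u_def left_diff_distrib sum_subtractf)
    qed
    moreover have "u \<in> vecs k" using x x' by (simp add: vecs_def u_def)
    ultimately have "u = (\<lambda>_. 0)" using rows_indep[OF rkA] by blast
    then show "x = x'" by (simp add: u_def fun_eq_iff)
  qed
  have "(\<lambda>_. 0) \<in> (vecs k :: (nat \<Rightarrow> 'a) set)" by (simp add: vecs_def)
  then have vne: "vecs k \<noteq> ({} :: (nat \<Rightarrow> 'a) set)" by blast
  have "affine_source A \<beta> k n = pmf_of_set (h ` vecs k)" by (simp add: affine_source_def h_def)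
  also have "\<dots> = map_pmf h (pmf_of_set (vecs k))" using map_pmf_of_set_inj[OF inj_h vne finite_vecs] by simp
  finally have src: "affine_source A \<beta> k n = map_pmf h (pmf_of_set (vecs k))" .
  define N where "N = (\<lambda>l i. \<Sum>j<n. G l j * A i j)"
  define bb where "bb = (\<lambda>l. \<Sum>j<n. G l j * \<beta> j)"
  define g where "g = (\<lambda>x. mat_vec G kt n (h x))"
  have gform: "\<forall>x. g x = (\<lambda>l. if l < kt then (\<Sum>i<k. N l i * x i) + bb l else 0)"
  proof (intro allI ext)
    fix x l
    show "g x l = (if l < kt then (\<Sum>i<k. N l i * x i) + bb l else 0)"
    proof (cases "l < kt")
      case True
      have "g x l = (\<Sum>j<n. G l j * ((\<Sum>i<k. A i j * x i) + \<beta> j))"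
        using True by (simp add: g_def mat_vec_def h_def vec_mat_def mult.commute)
      also have "\<dots> = (\<Sum>j<n. G l j * (\<Sum>i<k. A i j * x i)) + bb l"
        by (simp add: bb_def distrib_left sum.distrib)
      also have "(\<Sum>j<n. G l j * (\<Sum>i<k. A i j * x i)) = (\<Sum>i<k. (\<Sum>j<n. G l j * A i j) * x i)"
        by (rule bilin)
      finally show ?thesis using True by (simp add: N_def)
    next
      case False then show ?thesis by (simp add: g_def mat_vec_def)
    qed
  qed
  have Nsurj: "\<forall>z\<in>vecs kt. \<exists>x\<in>vecs k. \<forall>l<kt. (\<Sum>i<k. N l i * x i) = z l"
  proof (rule cols_surj)
    show "\<forall>y\<in>vecs kt. (\<forall>i<k. (\<Sum>l<kt. y l * N l i) = 0) \<longrightarrow> y = (\<lambda>_. 0)"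
    proof (intro ballI impI)
      fix y assume y: "y \<in> vecs kt" and yN: "\<forall>i<k. (\<Sum>l<kt. y l * N l i) = 0"
      define c where "c = vec_mat y G kt n"
      have cC: "c \<in> code_of G kt n" using y by (simp add: code_of_def c_def)
      have orth: "\<forall>i<k. (\<Sum>j<n. A i j * c j) = 0"
      proof (intro allI impI)
        fix i assume i: "i<k"
        have "(\<Sum>l<kt. y l * N l i) = (\<Sum>j<n. (\<Sum>l<kt. y l * G l j) * A i j)"
          unfolding N_def by (rule bilin)
        moreover have "(\<Sum>j<n. A i j * c j) = (\<Sum>j<n. (\<Sum>l<kt. y l * G l j) * A i j)"
          by (intro sum.cong) (simp_all add: c_def vec_mat_def mult.commute)
        ultimately show "(\<Sum>j<n. A i j * c j) = 0" using yN i by simp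
      qed
      have "c = (\<lambda>_. 0)"
      proof (rule ccontr)
        assume "c \<noteq> (\<lambda>_. 0)"
        then have "d \<le> rank_wt F m phi n c" using dmin cC by blast
        moreover have "rank_wt F m phi n c + k \<le> n" by (rule rank_bound[OF sf iso AF rkA orth])
        ultimately show False using kge by arith
      qed
      then have "\<forall>j<n. (\<Sum>l<kt. y l * G l j) = 0"
        by (auto simp: c_def vec_mat_def fun_eq_iff split: if_splits)
      then show "y = (\<lambda>_. 0)" using rows_indep[OF rkG y] by blast
    qed
  qed
  have img: "g ` vecs k = vecs kt"
  proof
    show "g ` vecs k \<subseteq> vecs kt" using gform by (auto simp: vecs_def)
    show "vecs kt \<subseteq> g ` vecs k"
    proof
      fix z :: "nat \<Rightarrow> 'a" assume z: "z \<in> vecs kt"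
      define z' where "z' = (\<lambda>l. if l < kt then z l - bb l else 0)"
      have "z' \<in> vecs kt" by (simp add: z'_def vecs_def)
      then obtain x where x: "x \<in> vecs k" "\<forall>l<kt. (\<Sum>i<k. N l i * x i) = z' l" using Nsurj by blast
      have gx: "g x = z"
      proof
        fix l show "g x l = z l" using gform x(2) z by (cases "l < kt") (simp_all add: z'_def vecs_def)
      qed
      show "z \<in> g ` vecs k" by (rule rev_image_eqI[OF x(1)]) (use gx in simp)
    qed
  qed
  have fibs: "\<forall>y\<in>vecs kt. \<forall>y'\<in>vecs kt. card {x\<in>vecs k. g x = y} \<le> card {x\<in>vecs k. g x = y'}"
  proof (intro ballI)
    fix y y' :: "nat \<Rightarrow> 'a" assume y: "y \<in> vecs kt" and y': "y' \<in> vecs kt"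
    define z where "z = (\<lambda>l. if l < kt then y' l - y l else 0)"
    have "z \<in> vecs kt" by (simp add: z_def vecs_def)
    then obtain t where t: "t \<in> vecs k" "\<forall>l<kt. (\<Sum>i<k. N l i * t i) = z l" using Nsurj by blast
    let ?tr = "\<lambda>x::nat\<Rightarrow>'a. (\<lambda>i. x i + t i)"
    have "inj_on ?tr {x\<in>vecs k. g x = y}" by (rule inj_onI) (simp add: fun_eq_iff)
    moreover have "?tr ` {x\<in>vecs k. g x = y} \<subseteq> {x\<in>vecs k. g x = y'}"
    proof
      fix w assume "w \<in> ?tr ` {x\<in>vecs k. g x = y}"
      then obtain x where x: "x \<in> vecs k" "g x = y" "w = ?tr x" by blast
      have "w \<in> vecs k" using x(1,3) t(1) by (simp add: vecs_def)
      moreover have "g w = y'"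
      proof
        fix l show "g w l = y' l"
        proof (cases "l < kt")
          case True
          have "g w l = (\<Sum>i<k. N l i * (x i + t i)) + bb l" using gform True x(3) by simp
          also have "\<dots> = ((\<Sum>i<k. N l i * x i) + bb l) + (\<Sum>i<k. N l i * t i)"
            by (simp add: distrib_left sum.distrib)
          also have "(\<Sum>i<k. N l i * x i) + bb l = y l" using fun_cong[OF x(2), of l] gform True by simp
          also have "(\<Sum>i<k. N l i * t i) = z l" using t(2) True by simp
          finally show ?thesis using True by (simp add: z_def)
        next
          case False then show ?thesis using gform y' by (simp add: vecs_def)
        qed
      qed
      ultimately show "w \<in> {x\<in>vecs k. g x = y'}" by simp
    qed
    moreover have "finite {x\<in>vecs k. g x = y'}" using finite_vecs[of k, where 'a='a] by simp
    ultimately show "card {x\<in>vecs k. g x = y} \<le> card {x\<in>vecs k. g x = y'}"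
      by (intro card_inj_on_le)
  qed
  have "map_pmf (mat_vec G kt n) (affine_source A \<beta> k n) = map_pmf g (pmf_of_set (vecs k))"
    using src by (simp add: map_pmf_comp g_def)
  also have "\<dots> = pmf_of_set (vecs kt)" by (rule map_pmf_uniform[OF finite_vecs img vne fibs])
  finally show "map_pmf (mat_vec G kt n) (affine_source A \<beta> k n) = pmf_of_set (vecs kt)" .
qed

lemma ext_img:
  fixes F :: "'a::{finite,field} set" and E :: "(nat \<Rightarrow> 'a) \<Rightarrow> nat \<Rightarrow> 'a"
  assumes ext: "restricted_extractor F E n kt t" and kt: "t \<le> k"
    and AF: "\<forall>i<k. \<forall>j<n. A i j \<in> F" and rk: "mat_rank UNIV A k n = k" and bv: "\<beta> \<in> vecs n"
  shows "E ` ((\<lambda>x. \<lambda>j. vec_mat x A k n j + \<beta> j) ` vecs k) = vecs kt"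
proof -
  have e: "map_pmf E (affine_source A \<beta> k n) = pmf_of_set (vecs kt)"
    using ext kt AF rk bv unfolding restricted_extractor_def by blast
  have "(\<lambda>_. 0) \<in> (vecs k :: (nat \<Rightarrow> 'a) set)" by (simp add: vecs_def)
  then have ne1: "(\<lambda>x. \<lambda>j. vec_mat x A k n j + \<beta> j) ` vecs k \<noteq> {}" by blast
  have f1: "finite ((\<lambda>x. \<lambda>j. vec_mat x A k n j + \<beta> j) ` vecs k)" using finite_vecs by blast
  have "(\<lambda>_. 0) \<in> (vecs kt :: (nat \<Rightarrow> 'a) set)" by (simp add: vecs_def)
  then have ne2: "vecs kt \<noteq> ({} :: (nat \<Rightarrow> 'a) set)" by blast
  have "set_pmf (map_pmf E (affine_source A \<beta> k n)) = set_pmf (pmf_of_set (vecs kt))" using e by simp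
  then show ?thesis using ne1 f1 ne2 finite_vecs[of kt, where 'a='a]
    by (simp add: affine_source_def)
qed

lemma dir2a:
  fixes F :: "'a::{finite,field} set" and G :: "nat \<Rightarrow> nat \<Rightarrow> 'a"
  assumes sf: "is_subfield F" and d1: "1 \<le> d" and dn: "d \<le> n"
    and ext: "restricted_extractor F (mat_vec G kt n) n kt (n - d + 1)"
  shows "mat_rank UNIV G kt n = kt"
proof -
  define I :: "nat \<Rightarrow> nat \<Rightarrow> 'a" where "I = (\<lambda>i j. if i = j then 1 else 0)"
  have F01: "0 \<in> F" "1 \<in> F" using sf by (simp_all add: is_subfield_def)
  have IF: "\<forall>i<n. \<forall>j<n. I i j \<in> F" using F01 by (simp add: I_def)
  have fU: "finite (UNIV::'a set)" by simp
  have rkI: "mat_rank UNIV I n n = n"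
  proof (rule antisym)
    show "mat_rank UNIV I n n \<le> n" by (rule mr_le[OF subfield_UNIV fU]) simp
    have "indep_cols UNIV I n {..<n}" unfolding indep_cols_def
    proof (intro allI impI)
      fix a assume h: "(\<forall>j\<in>{..<n}. a j \<in> UNIV) \<and> (\<forall>i<n. (\<Sum>j\<in>{..<n}. a j * I i j) = 0)"
      show "\<forall>j\<in>{..<n}. a j = 0"
      proof
        fix j assume j: "j \<in> {..<n}"
        have "(\<Sum>l\<in>{..<n}. a l * I j l) = (\<Sum>l\<in>{..<n}. if l = j then a l else 0)"
          by (intro sum.cong) (auto simp: I_def)
        also have "\<dots> = a j" using j by simp
        finally show "a j = 0" using h j by simp
      qed
    qed
    then have "card {..<n} \<le> mat_rank UNIV I n n" by (intro mr_ge) simp_all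
    then show "n \<le> mat_rank UNIV I n n" by simp
  qed
  have hid: "(\<lambda>x. \<lambda>j. vec_mat x I n n j + 0) ` vecs n = (vecs n :: (nat \<Rightarrow> 'a) set)"
  proof -
    have "\<forall>x\<in>vecs n. (\<lambda>j. vec_mat x I n n j + 0) = x"
    proof
      fix x :: "nat \<Rightarrow> 'a" assume x: "x \<in> vecs n"
      show "(\<lambda>j. vec_mat x I n n j + 0) = x"
      proof
      fix j
      show "vec_mat x I n n j + 0 = x j"
      proof (cases "j < n")
        case True
        have "(\<Sum>i<n. x i * I i j) = (\<Sum>i<n. if i = j then x i else 0)"
          by (intro sum.cong) (auto simp: I_def)
        also have "\<dots> = x j" using True by simp
        finally show ?thesis using True by (simp add: vec_mat_def)
      next
        case False then show ?thesis using x by (simp add: vec_mat_def vecs_def)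
      qed
      qed
    qed
    then show ?thesis by simp
  qed
  have Eimg: "mat_vec G kt n ` vecs n = vecs kt"
  proof -
    have "n - d + 1 \<le> n" using d1 dn by simp
    moreover have "(\<lambda>_. 0) \<in> (vecs n :: (nat \<Rightarrow> 'a) set)" by (simp add: vecs_def)
    ultimately have "mat_vec G kt n ` ((\<lambda>x. \<lambda>j. vec_mat x I n n j + 0) ` vecs n) = vecs kt"
      using ext_img[OF ext _ IF rkI, where \<beta>="\<lambda>_. 0"] by simp
    then show ?thesis using hid by simp
  qed
  obtain S where S: "S \<subseteq> {..<n}" "indep_cols UNIV G kt S" "card S = mat_rank UNIV G kt n"
    using mr_obtain by blast
  have fS: "finite S" using finite_subset[OF S(1)] by simp
  have "\<forall>j. \<exists>b. j < n \<longrightarrow> (b \<in> Wv UNIV S \<and> (\<forall>l<kt. G l j = (\<Sum>s\<in>S. b s * G l s)))"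
    using mr_span[OF subfield_UNIV S] by blast
  from choice[OF this] obtain B where B: "\<forall>j. j < n \<longrightarrow> (B j \<in> Wv UNIV S \<and> (\<forall>l<kt. G l j = (\<Sum>s\<in>S. B j s * G l s)))"
    by blast
  define Fp where "Fp = (\<lambda>a::nat\<Rightarrow>'a. \<lambda>l. if l < kt then (\<Sum>s\<in>S. a s * G l s) else 0)"
  have sub: "vecs kt \<subseteq> Fp ` Wv UNIV S"
  proof
    fix z :: "nat \<Rightarrow> 'a" assume "z \<in> vecs kt"
    then obtain x where x: "x \<in> vecs n" "z = mat_vec G kt n x" using Eimg by blast
    define a where "a = (\<lambda>s. \<Sum>j<n. x j * B j s)"
    have aW: "a \<in> Wv UNIV S" using B by (auto simp: Wv_def a_def)
    have "mat_vec G kt n x = Fp a"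
    proof
      fix l show "mat_vec G kt n x l = Fp a l"
      proof (cases "l < kt")
        case True
        have "(\<Sum>j<n. G l j * x j) = (\<Sum>j<n. x j * (\<Sum>s\<in>S. B j s * G l s))"
          using B True by (intro sum.cong) (simp_all add: mult.commute)
        also have "\<dots> = (\<Sum>s\<in>S. (\<Sum>j<n. x j * B j s) * G l s)" by (rule bilin)
        finally show ?thesis using True by (simp add: mat_vec_def Fp_def a_def)
      next
        case False then show ?thesis by (simp add: mat_vec_def Fp_def)
      qed
    qed
    then show "z \<in> Fp ` Wv UNIV S" using x(2) aW by blast
  qed
  have "card (vecs kt :: (nat \<Rightarrow> 'a) set) \<le> card (Fp ` Wv UNIV S)"
    using sub card_Wv[OF fS fU] by (intro card_mono) auto
  also have "\<dots> \<le> card (Wv UNIV S :: (nat \<Rightarrow> 'a) set)" using card_Wv[OF fS fU] by (intro card_image_le) simp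
  finally have "CARD('a) ^ kt \<le> CARD('a) ^ card S" using card_Wv[OF fS fU] card_vecs[of kt, where 'a='a] by simp
  moreover have "1 < CARD('a)" using subfield_card2[OF subfield_UNIV fU] by simp
  ultimately have "kt \<le> card S" using power_le_imp_le_exp by blast
  moreover have "mat_rank UNIV G kt n \<le> kt" by (rule mr_le[OF subfield_UNIV fU]) simp
  ultimately show ?thesis using S(3) by simp
qed

lemma dir2b:
  fixes F :: "'a::{finite,field} set" and G :: "nat \<Rightarrow> nat \<Rightarrow> 'a"
  assumes sf: "is_subfield F" and iso: "is_coord_iso F m phi" and dn: "d \<le> n"
    and ext: "restricted_extractor F (mat_vec G kt n) n kt (n - d + 1)"
    and cC: "c \<in> code_of G kt n" and cnz: "c \<noteq> (\<lambda>_. 0)"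
  shows "d \<le> rank_wt F m phi n c"
proof (rule ccontr)
  assume "\<not> d \<le> rank_wt F m phi n c"
  then have rlt: "rank_wt F m phi n c < d" by simp
  obtain y where y: "y \<in> vecs kt" "c = vec_mat y G kt n" using cC unfolding code_of_def by blast
  obtain S where S: "S \<subseteq> {..<n}" "indep_cols F (Phi phi c) m S" "card S = mat_rank F (Phi phi c) m n"
    using mr_obtain by blast
  have Sr: "card S = rank_wt F m phi n c" using S(3) by (simp add: rank_wt_def)
  have fS: "finite S" using finite_subset[OF S(1)] by simp
  have F01: "0 \<in> F" "1 \<in> F" using sf by (simp_all add: is_subfield_def)
  have span: "\<forall>j. \<exists>b. j < n \<longrightarrow> (b \<in> Wv F S \<and> c j = (\<Sum>s\<in>S. b s * c s))"
  proof
    fix j show "\<exists>b. j < n \<longrightarrow> (b \<in> Wv F S \<and> c j = (\<Sum>s\<in>S. b s * c s))"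
    proof (cases "j < n")
      case False then show ?thesis by blast
    next
      case True
      obtain b where b: "b \<in> Wv F S" "\<forall>i<m. Phi phi c i j = (\<Sum>s\<in>S. b s * Phi phi c i s)"
        using mr_span[OF sf S True] by blast
      have bF: "\<forall>s\<in>S. b s \<in> F" using b(1) by (simp add: Wv_def)
      have "phi (c j) = phi (\<Sum>s\<in>S. b s * c s)"
      proof
        fix i
        show "phi (c j) i = phi (\<Sum>s\<in>S. b s * c s) i"
        proof (cases "i < m")
          case True then show ?thesis using b(2) phi_sum[OF iso fS bF] by (simp add: Phi_def)
        next
          case False then show ?thesis using phi_range(2)[OF iso] by simp
        qed
      qed
      then have "c j = (\<Sum>s\<in>S. b s * c s)" by (rule phi_inj[OF iso])
      then show ?thesis using b(1) by blast
    qed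
  qed
  from choice[OF span] obtain B where
    B: "\<forall>j. j < n \<longrightarrow> (B j \<in> Wv F S \<and> c j = (\<Sum>s\<in>S. B j s * c s))" by blast
  define T where "T = {..<n} - S"
  have fT: "finite T" by (simp add: T_def)
  have TS: "T \<subseteq> {..<n}" "\<forall>j\<in>T. j \<notin> S" by (auto simp: T_def)
  define k where "k = card T"
  have kval: "k = n - card S" using S(1) fS by (simp add: k_def T_def card_Diff_subset)
  obtain \<sigma> where \<sigma>: "bij_betw \<sigma> {0..<k} T" using ex_bij_betw_nat_finite[OF fT] unfolding k_def by blast
  have \<sigma>T: "\<forall>i<k. \<sigma> i \<in> T" using \<sigma> by (auto simp: bij_betw_def)
  have \<sigma>surj: "\<forall>j\<in>T. \<exists>i<k. \<sigma> i = j" using \<sigma> unfolding bij_betw_def by force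
  define A :: "nat \<Rightarrow> nat \<Rightarrow> 'a" where
    "A = (\<lambda>i j. (if j = \<sigma> i then 1 else 0) - (if j \<in> S then B (\<sigma> i) j else 0))"
  have AF: "\<forall>i<k. \<forall>j<n. A i j \<in> F"
  proof (intro allI impI)
    fix i j assume i: "i < k" and j: "j < n"
    have "\<sigma> i < n" using \<sigma>T i TS by auto
    then have "B (\<sigma> i) \<in> Wv F S" using B by blast
    then have "(if j \<in> S then B (\<sigma> i) j else 0) \<in> F" using F01 by (simp add: Wv_def)
    moreover have "(if j = \<sigma> i then 1 else 0) \<in> F" using F01 by simp
    ultimately show "A i j \<in> F" unfolding A_def using sf by (intro subfield_diff)
  qed
  have AT: "\<forall>i<k. \<forall>j\<in>T. A i j = (if j = \<sigma> i then 1 else 0)" using TS by (simp add: A_def)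
  have fU: "finite (UNIV::'a set)" by simp
  have rkA: "mat_rank UNIV A k n = k"
  proof (rule antisym)
    show "mat_rank UNIV A k n \<le> k" by (rule mr_le[OF subfield_UNIV fU]) simp
    have "indep_cols UNIV A k T" unfolding indep_cols_def
    proof (intro allI impI)
      fix a assume h: "(\<forall>j\<in>T. a j \<in> UNIV) \<and> (\<forall>i<k. (\<Sum>j\<in>T. a j * A i j) = 0)"
      show "\<forall>j\<in>T. a j = 0"
      proof
        fix j assume j: "j \<in> T"
        then obtain i where i: "i < k" "\<sigma> i = j" using \<sigma>surj by blast
        have "(\<Sum>l\<in>T. a l * A i l) = (\<Sum>l\<in>T. if l = \<sigma> i then a l else 0)"
          using AT i(1) by (intro sum.cong) auto
        also have "\<dots> = a j" using j i fT by simp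
        finally show "a j = 0" using h i by simp
      qed
    qed
    then have "card T \<le> mat_rank UNIV A k n" using TS(1) by (intro mr_ge)
    then show "k \<le> mat_rank UNIV A k n" by (simp add: k_def)
  qed
  have orth: "\<forall>i<k. (\<Sum>j<n. A i j * c j) = 0"
  proof (intro allI impI)
    fix i assume i: "i < k"
    define t where "t = \<sigma> i"
    have t: "t < n" "t \<notin> S" using \<sigma>T i TS unfolding t_def by auto
    have "(\<Sum>j<n. A i j * c j) = (\<Sum>j<n. (if j = t then c j else 0) - (if j \<in> S then B t j * c j else 0))"
      by (intro sum.cong) (auto simp: A_def t_def left_diff_distrib)
    also have "\<dots> = (\<Sum>j<n. if j = t then c j else 0) - (\<Sum>j<n. if j \<in> S then B t j * c j else 0)"
      by (rule sum_subtractf)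
    also have "(\<Sum>j<n. if j = t then c j else 0) = c t" using t by simp
    also have "(\<Sum>j<n. if j \<in> S then B t j * c j else 0) = (\<Sum>j\<in>{..<n} \<inter> S. B t j * c j)"
      by (rule sum.inter_restrict[symmetric]) simp
    also have "{..<n} \<inter> S = S" using S(1) by blast
    also have "c t - (\<Sum>j\<in>S. B t j * c j) = 0" using B t by simp
    finally show "(\<Sum>j<n. A i j * c j) = 0" .
  qed
  have "card S \<le> n" using card_mono[OF _ S(1)] by simp
  then have kge: "n - d + 1 \<le> k" using kval rlt Sr dn by simp
  have bv: "(\<lambda>_. 0) \<in> (vecs n :: (nat \<Rightarrow> 'a) set)" by (simp add: vecs_def)
  have img: "mat_vec G kt n ` ((\<lambda>x. \<lambda>j. vec_mat x A k n j + 0) ` vecs k) = vecs kt"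
    using ext_img[OF ext kge AF rkA bv] by simp
  have ynz: "y \<noteq> (\<lambda>_. 0)"
  proof
    assume "y = (\<lambda>_. 0)"
    then have "c = (\<lambda>_. 0)" using y(2) by (simp add: vec_mat_def fun_eq_iff)
    then show False using cnz by simp
  qed
  then obtain l0 where l0y: "y l0 \<noteq> 0" by (auto simp: fun_eq_iff)
  then have l0: "l0 < kt" using y(1) by (simp add: vecs_def) (meson not_le)
  define z :: "nat \<Rightarrow> 'a" where "z = (\<lambda>l. if l = l0 then 1 else 0)"
  have "z \<in> vecs kt" using l0 by (simp add: z_def vecs_def)
  then obtain x where x: "x \<in> vecs k" "z = mat_vec G kt n (\<lambda>j. vec_mat x A k n j + 0)"
    using img by blast
  have "(\<Sum>l<kt. y l * z l) = (\<Sum>l<kt. if l = l0 then y l else 0)"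
    by (intro sum.cong) (simp_all add: z_def)
  also have "\<dots> = y l0" using l0 by simp
  finally have s1: "(\<Sum>l<kt. y l * z l) = y l0" .
  define v where "v = (\<lambda>j. vec_mat x A k n j + 0)"
  have "(\<Sum>l<kt. y l * z l) = (\<Sum>l<kt. y l * (\<Sum>j<n. G l j * v j))"
    by (intro sum.cong) (simp_all add: x(2) mat_vec_def v_def)
  also have "\<dots> = (\<Sum>j<n. (\<Sum>l<kt. y l * G l j) * v j)" by (rule bilin)
  also have "\<dots> = (\<Sum>j<n. c j * (\<Sum>i<k. A i j * x i))"
    by (intro sum.cong) (simp_all add: y(2) v_def vec_mat_def mult.commute)
  also have "\<dots> = (\<Sum>i<k. (\<Sum>j<n. c j * A i j) * x i)" by (rule bilin)
  also have "\<dots> = 0" using orth by (intro sum.neutral) (simp add: mult.commute)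
  finally show False using s1 l0y by simp
qed

theorem mainTheorem6:
  fixes F :: "'a::{finite,field} set"
    and m n kt d :: nat
    and phi :: "'a \<Rightarrow> nat \<Rightarrow> 'a"
    and G :: "nat \<Rightarrow> nat \<Rightarrow> 'a"
  assumes "is_subfield F"
    and "1 \<le> m"
    and "is_coord_iso F m phi"
  shows "(is_rank_code_gen F m phi G n kt d \<longrightarrow>
            restricted_extractor F (mat_vec G kt n) n kt (n - d + 1))
       \<and> (1 \<le> d \<and> d \<le> n \<and> restricted_extractor F (mat_vec G kt n) n kt (n - d + 1) \<longrightarrow>
            mat_rank UNIV G kt n = kt \<and>
            (\<forall>c\<in>code_of G kt n. c \<noteq> (\<lambda>_. 0) \<longrightarrow> d \<le> rank_wt F m phi n c))"
proof (intro conjI impI)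
  assume "is_rank_code_gen F m phi G n kt d"
  then show "restricted_extractor F (mat_vec G kt n) n kt (n - d + 1)"
    using dir1[OF assms(1) assms(3)] by blast
next
  assume h: "1 \<le> d \<and> d \<le> n \<and> restricted_extractor F (mat_vec G kt n) n kt (n - d + 1)"
  show "mat_rank UNIV G kt n = kt" using dir2a[OF assms(1)] h by blast
  show "\<forall>c\<in>code_of G kt n. c \<noteq> (\<lambda>_. 0) \<longrightarrow> d \<le> rank_wt F m phi n c"
    using dir2b[OF assms(1) assms(3)] h by blast
qed

end
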